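(* For every $n\ge1$, the set of integer posets on $[n]$, ordered by the weak order on integer relations, is a lattice.
   Context: An integer relation of size $n$ is a reflexive binary relation $R$ on $[n]=\{1,\dots,n\}$. Its increasing part is $\mathrm{Inc}(R)=\{(a,b)\in R: a<b\}$ and its decreasing part is $\mathrm{Dec}(R)=\{(b,a)\in R: a<b\}$. The weak order on integer relations: $R\le S$ iff $\mathrm{Inc}(S)\subseteq\mathrm{Inc}(R)$ and $\mathrm{Dec}(R)\subseteq\mathrm{Dec}(S)$. An integer poset is an integer relation that is antisymmetric and transitive. *)

theory Defs
  imports "HOL-Algebra.Lattice"
begin

definition int_rel :: "nat \<Rightarrow> (nat \<times> nat) set \<Rightarrow> bool" where
  "int_rel n R \<longleftrightarrow> R \<subseteq> {1..n} \<times> {1..n} \<and> (\<forall>i\<in>{1..n}. (i, i) \<in> R)"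

definition Inc :: "(nat \<times> nat) set \<Rightarrow> (nat \<times> nat) set" where
  "Inc R = {(a, b). (a, b) \<in> R \<and> a < b}"

definition Dec :: "(nat \<times> nat) set \<Rightarrow> (nat \<times> nat) set" where
  "Dec R = {(b, a). (b, a) \<in> R \<and> a < b}"

definition weak_le :: "(nat \<times> nat) set \<Rightarrow> (nat \<times> nat) set \<Rightarrow> bool" where
  "weak_le R S \<longleftrightarrow> Inc S \<subseteq> Inc R \<and> Dec R \<subseteq> Dec S"

definition int_poset :: "nat \<Rightarrow> (nat \<times> nat) set \<Rightarrow> bool" where
  "int_poset n R \<longleftrightarrow> int_rel n R \<and> antisym R \<and> trans R"

definition IPos_weak :: "nat \<Rightarrow> (nat \<times> nat) set gorder" where
  "IPos_weak n = \<lparr>carrier = {R. int_poset n R}, eq = (=), le = weak_le\<rparr>"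

end

theory Submission
  imports Defs
begin

context
  fixes n :: nat and R S :: "(nat \<times> nat) set"
  assumes PR: "int_poset n R" and PS: "int_poset n S"
begin

definition "LB = {T. int_poset n T \<and> weak_le T R \<and> weak_le T S}"
definition "II = (Inc R \<union> Inc S)\<^sup>+"
definition "DD = \<Union>(Dec ` LB)"
definition "D = DD\<^sup>+"
definition "M = Id_on {1..n} \<union> II \<union> D"

lemma LB_I: "T \<in> LB \<Longrightarrow> II \<subseteq> T"
proof -
  assume T: "T \<in> LB"
  hence tT: "trans T" and le: "weak_le T R" "weak_le T S" by (auto simp: LB_def int_poset_def)
  have "Inc R \<union> Inc S \<subseteq> T" using le by (auto simp: weak_le_def Inc_def)
  hence "II \<subseteq> T\<^sup>+" unfolding II_def by (meson subsetI trancl_mono)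
  thus ?thesis using trancl_id[OF tT] by simp
qed

lemma II_inc: "(a,b) \<in> II \<Longrightarrow> a < b"
  unfolding II_def
  by (induction rule: trancl_induct) (auto simp: Inc_def)

lemma D_dec: "(a,b) \<in> D \<Longrightarrow> b < a"
  unfolding D_def
  by (induction rule: trancl_induct) (auto simp: DD_def Dec_def)

lemma DD_sub: "DD \<subseteq> R \<inter> S"
  by (auto simp: DD_def LB_def weak_le_def Dec_def)

lemma D_sub: "D \<subseteq> R \<inter> S"
proof -
  have tR: "trans R" and tS: "trans S" using PR PS by (auto simp: int_poset_def)
  have "D \<subseteq> R\<^sup>+" "D \<subseteq> S\<^sup>+" unfolding D_def using DD_sub
    by (meson le_infE subsetI trancl_mono)+
  thus ?thesis using trancl_id[OF tR] trancl_id[OF tS] by simp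
qed

lemma II_sub: "II \<subseteq> {1..n} \<times> {1..n}"
proof -
  have "Inc R \<union> Inc S \<subseteq> {1..n} \<times> {1..n}" using PR PS
    by (auto simp: int_poset_def int_rel_def Inc_def)
  thus ?thesis unfolding II_def using trancl_subset_Sigma by blast
qed

lemma A0:
  assumes T: "T \<in> LB" and xy: "(x,y) \<in> II"
  shows "(y,z) \<in> Dec T \<Longrightarrow> (x < z \<and> (x,z) \<in> II) \<or> (z < x \<and> (x,z) \<in> Dec T)"
proof -
  have tT: "trans T" and aT: "antisym T" and le: "weak_le T R" "weak_le T S"
    using T by (auto simp: LB_def int_poset_def)
  have tR: "trans R" and tS: "trans S" using PR PS by (auto simp: int_poset_def)
  have IT: "II \<subseteq> T" using LB_I[OF T] .
  have bs: "(w,z) \<in> II \<or> (z < w \<and> (w,z) \<in> Dec T)"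
    if wy: "(w,y') \<in> Inc R \<union> Inc S" and yz: "(y',z) \<in> Dec T" for w y' z
  proof -
    have wy2: "(w,y') \<in> T" using wy IT unfolding II_def by blast
    have yzT: "(y',z) \<in> T" and yzRS: "(y',z) \<in> R" "(y',z) \<in> S"
      using yz le by (auto simp: Dec_def weak_le_def)
    have wzT: "(w,z) \<in> T" using tT wy2 yzT by (meson transD)
    have "w < y'" using wy by (auto simp: Inc_def)
    have "w \<noteq> z" using aT wy2 yzT \<open>w < y'\<close> by (metis antisymD less_irrefl)
    show ?thesis
    proof (cases "w < z")
      case True
      have "(w,z) \<in> Inc R \<union> Inc S" using wy yzRS tR tS True
        by (auto simp: Inc_def dest: transD)
      thus ?thesis unfolding II_def by blast
    next
      case False
      thus ?thesis using wzT \<open>w \<noteq> z\<close> by (auto simp: Dec_def)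
    qed
  qed
  from xy show "(y,z) \<in> Dec T \<Longrightarrow> (x < z \<and> (x,z) \<in> II) \<or> (z < x \<and> (x,z) \<in> Dec T)"
    unfolding II_def
  proof (induction arbitrary: z rule: trancl_induct)
    case (base y)
    then show ?case using bs[of x y z] II_inc unfolding II_def by blast
  next
    case (step y w)
    from bs[OF step(2) step(4)] show ?case
    proof
      assume "(y,z) \<in> II"
      hence "(x,z) \<in> (Inc R \<union> Inc S)\<^sup>+" using step(1) unfolding II_def by simp
      thus ?thesis using II_inc II_def by auto
    next
      assume "z < y \<and> (y, z) \<in> Dec T"
      thus ?thesis using step(3) by blast
    qed
  qed
qed

lemma B0:
  assumes T: "T \<in> LB" and yx: "(y,x) \<in> II"
  shows "(z,y) \<in> Dec T \<Longrightarrow> (z < x \<and> (z,x) \<in> II) \<or> (x < z \<and> (z,x) \<in> Dec T)"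
proof -
  have tT: "trans T" and aT: "antisym T" and le: "weak_le T R" "weak_le T S"
    using T by (auto simp: LB_def int_poset_def)
  have tR: "trans R" and tS: "trans S" using PR PS by (auto simp: int_poset_def)
  have IT: "II \<subseteq> T" using LB_I[OF T] .
  have bs: "(z,w) \<in> II \<or> (w < z \<and> (z,w) \<in> Dec T)"
    if wy: "(y',w) \<in> Inc R \<union> Inc S" and yz: "(z,y') \<in> Dec T" for w y' z
  proof -
    have wy2: "(y',w) \<in> T" using wy IT unfolding II_def by blast
    have yzT: "(z,y') \<in> T" and yzRS: "(z,y') \<in> R" "(z,y') \<in> S"
      using yz le by (auto simp: Dec_def weak_le_def)
    have wzT: "(z,w) \<in> T" using tT wy2 yzT by (meson transD)
    have "y' < w" using wy by (auto simp: Inc_def)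
    have "w \<noteq> z" using aT wy2 yzT \<open>y' < w\<close> by (metis antisymD less_irrefl)
    show ?thesis
    proof (cases "z < w")
      case True
      have "(z,w) \<in> Inc R \<union> Inc S" using wy yzRS tR tS True
        by (auto simp: Inc_def dest: transD)
      thus ?thesis unfolding II_def by blast
    next
      case False
      thus ?thesis using wzT \<open>w \<noteq> z\<close> by (auto simp: Dec_def)
    qed
  qed
  from yx show "(z,y) \<in> Dec T \<Longrightarrow> (z < x \<and> (z,x) \<in> II) \<or> (x < z \<and> (z,x) \<in> Dec T)"
    unfolding II_def
  proof (induction arbitrary: z rule: converse_trancl_induct)
    case (base y)
    then show ?case using bs[of y x z] II_inc unfolding II_def by blast
  next
    case (step y w)
    from bs[OF step(1) step(4)] show ?case
    proof
      assume "(z,w) \<in> II"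
      hence "(z,x) \<in> (Inc R \<union> Inc S)\<^sup>+" using step(2) unfolding II_def by simp
      thus ?thesis using II_inc II_def by auto
    next
      assume "w < z \<and> (z, w) \<in> Dec T"
      thus ?thesis using step(3) by blast
    qed
  qed
qed


lemma DecD: "T \<in> LB \<Longrightarrow> Dec T \<subseteq> D"
  unfolding D_def DD_def by (auto intro: r_into_trancl)

lemma A1:
  assumes xy: "(x,y) \<in> II"
  shows "(y,z) \<in> D \<Longrightarrow> (x < z \<and> (x,z) \<in> II) \<or> (z < x \<and> (x,z) \<in> D)"
  unfolding D_def
proof (induction rule: trancl_induct)
  case (base z)
  then obtain T where T: "T \<in> LB" "(y,z) \<in> Dec T" unfolding DD_def by blast
  show ?case using A0[OF T(1) xy T(2)] DecD[OF T(1)] unfolding D_def by blast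
next
  case (step w z)
  then obtain T where T: "T \<in> LB" "(w,z) \<in> Dec T" unfolding DD_def by blast
  from step(3) show ?case
  proof
    assume "x < w \<and> (x, w) \<in> II"
    thus ?case using A0[OF T(1) _ T(2)] DecD[OF T(1)] unfolding D_def by blast
  next
    assume h: "w < x \<and> (x, w) \<in> DD\<^sup>+"
    hence "(x,z) \<in> DD\<^sup>+" using step(2) by (meson trancl.trancl_into_trancl)
    moreover have "z < w" using D_dec T DecD by blast
    ultimately show ?case using h by auto
  qed
qed

lemma B1:
  assumes yx: "(y,x) \<in> II"
  shows "(z,y) \<in> D \<Longrightarrow> (z < x \<and> (z,x) \<in> II) \<or> (x < z \<and> (z,x) \<in> D)"
  unfolding D_def
proof (induction rule: converse_trancl_induct)
  case (base z)
  then obtain T where T: "T \<in> LB" "(z,y) \<in> Dec T" unfolding DD_def by blast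
  show ?case using B0[OF T(1) yx T(2)] DecD[OF T(1)] unfolding D_def by blast
next
  case (step z w)
  then obtain T where T: "T \<in> LB" "(z,w) \<in> Dec T" unfolding DD_def by blast
  from step(3) show ?case
  proof
    assume "w < x \<and> (w, x) \<in> II"
    thus ?case using B0[OF T(1) _ T(2)] DecD[OF T(1)] unfolding D_def by blast
  next
    assume h: "x < w \<and> (w, x) \<in> DD\<^sup>+"
    hence "(z,x) \<in> DD\<^sup>+" using step(1) by (meson trancl_into_trancl2)
    moreover have "w < z" using D_dec T DecD by blast
    ultimately show ?case using h by auto
  qed
qed

lemma M_poset: "int_poset n M"
proof -
  have D1: "D \<subseteq> {1..n} \<times> {1..n}" using D_sub PR by (auto simp: int_poset_def int_rel_def)
  have rel: "int_rel n M" using II_sub D1 unfolding int_rel_def M_def by auto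
  have anti: "antisym M"
  proof (rule antisymI)
    fix a b assume ab: "(a,b) \<in> M" and ba: "(b,a) \<in> M"
    show "a = b"
    proof (rule ccontr)
      assume ne: "a \<noteq> b"
      hence "(a,b) \<in> II \<union> D" "(b,a) \<in> II \<union> D" using ab ba unfolding M_def by auto
      thus False using II_inc D_dec A1[of a b a] A1[of b a b]
        by (meson UnE less_asym less_irrefl)
    qed
  qed
  have tr: "trans M"
  proof (rule transI)
    fix a b c assume ab: "(a,b) \<in> M" and bc: "(b,c) \<in> M"
    show "(a,c) \<in> M"
    proof (cases "a = b \<or> b = c")
      case True thus ?thesis using ab bc by auto
    next
      case False
      hence "(a,b) \<in> II \<union> D" "(b,c) \<in> II \<union> D" using ab bc unfolding M_def by auto
      moreover have "a = c \<Longrightarrow> (a,c) \<in> M" using ab rel unfolding M_def int_rel_def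
        by auto
      moreover have "(a,b) \<in> II \<Longrightarrow> (b,c) \<in> II \<Longrightarrow> (a,c) \<in> M"
        unfolding M_def II_def by (meson UnI1 UnI2 trancl_trans)
      moreover have "(a,b) \<in> D \<Longrightarrow> (b,c) \<in> D \<Longrightarrow> (a,c) \<in> M"
        unfolding M_def D_def by (meson UnI2 trancl_trans)
      moreover have "(a,b) \<in> II \<Longrightarrow> (b,c) \<in> D \<Longrightarrow> (a,c) \<in> M"
        using A1[of a b c] unfolding M_def by auto
      moreover have "(a,b) \<in> D \<Longrightarrow> (b,c) \<in> II \<Longrightarrow> (a,c) \<in> M"
        using B1[of b c a] unfolding M_def by auto
      ultimately show ?thesis by blast
    qed
  qed
  show ?thesis using rel anti tr unfolding int_poset_def by auto
qed

lemma Inc_M: "Inc M = II"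
  using II_inc D_dec unfolding M_def Inc_def by fastforce

lemma Dec_M: "Dec M = D"
  using II_inc D_dec unfolding M_def Dec_def by fastforce

lemma M_LB: "M \<in> LB"
proof -
  have "Inc R \<subseteq> II" "Inc S \<subseteq> II" unfolding II_def by auto
  moreover have "Dec M \<subseteq> Dec R" "Dec M \<subseteq> Dec S" using Dec_M D_sub D_dec
    by (auto simp: Dec_def)
  ultimately show ?thesis using M_poset Inc_M unfolding LB_def weak_le_def by auto
qed

lemma M_greatest: "T \<in> LB \<Longrightarrow> weak_le T M"
  using LB_I[of T] DecD[of T] Inc_M Dec_M unfolding weak_le_def Inc_def by auto

lemma meet_ex: "\<exists>M. int_poset n M \<and> weak_le M R \<and> weak_le M S \<and>
   (\<forall>T. int_poset n T \<and> weak_le T R \<and> weak_le T S \<longrightarrow> weak_le T M)"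
  using M_LB M_greatest unfolding LB_def by blast

end


lemma decomp: "int_rel n R \<Longrightarrow> R = Id_on {1..n} \<union> Inc R \<union> Dec R"
  unfolding int_rel_def Inc_def Dec_def by (auto simp: Id_on_def)

lemma weak_antisym: "int_poset n R \<Longrightarrow> int_poset n S \<Longrightarrow> weak_le R S \<Longrightarrow> weak_le S R \<Longrightarrow> R = S"
  using decomp[of n R] decomp[of n S] unfolding int_poset_def weak_le_def by auto

lemma Inc_conv: "Inc (R\<inverse>) = (Dec R)\<inverse>" and Dec_conv: "Dec (R\<inverse>) = (Inc R)\<inverse>"
  unfolding Inc_def Dec_def by auto

lemma weak_le_conv: "weak_le (R\<inverse>) (S\<inverse>) \<longleftrightarrow> weak_le S R"
  unfolding weak_le_def Inc_conv Dec_conv by auto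

lemma poset_conv: "int_poset n (R\<inverse>) \<longleftrightarrow> int_poset n R"
  unfolding int_poset_def int_rel_def by auto

lemma join_ex:
  assumes "int_poset n R" "int_poset n S"
  shows "\<exists>J. int_poset n J \<and> weak_le R J \<and> weak_le S J \<and>
   (\<forall>T. int_poset n T \<and> weak_le R T \<and> weak_le S T \<longrightarrow> weak_le J T)"
proof -
  obtain M where M: "int_poset n M" "weak_le M (R\<inverse>)" "weak_le M (S\<inverse>)"
    "\<forall>T. int_poset n T \<and> weak_le T (R\<inverse>) \<and> weak_le T (S\<inverse>) \<longrightarrow> weak_le T M"
    using meet_ex[of n "R\<inverse>" "S\<inverse>"] assms by (simp add: poset_conv) (elim exE conjE, assumption)
  have "int_poset n (M\<inverse>)" using M(1) poset_conv by blast
  moreover have "weak_le R (M\<inverse>)" "weak_le S (M\<inverse>)"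
    using M(2,3) weak_le_conv[of "M\<inverse>" R] weak_le_conv[of "M\<inverse>" S] by simp_all
  moreover have "weak_le (M\<inverse>) T" if "int_poset n T" "weak_le R T" "weak_le S T" for T
  proof -
    have "weak_le (T\<inverse>) M" using M(4)[rule_format, of "T\<inverse>"] that by (simp add: poset_conv weak_le_conv)
    thus ?thesis using weak_le_conv[of T "M\<inverse>"] by simp
  qed
  ultimately show ?thesis by blast
qed

lemma po_ax: "partial_order (IPos_weak n)"
  proof (unfold_locales, goal_cases)
    case (1 x) thus ?case by (simp add: IPos_weak_def)
  next
    case (2 x y) thus ?case by (simp add: IPos_weak_def)
  next
    case (3 x y z) thus ?case by (simp add: IPos_weak_def)
  next
    case (4 x) thus ?case by (simp add: IPos_weak_def weak_le_def)
  next
    case (5 x y) thus ?case using weak_antisym[of n x y] by (simp add: IPos_weak_def)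
  next
    case (6 x y z) thus ?case by (simp add: IPos_weak_def weak_le_def) blast
  next
    case (7 x y z w) thus ?case by (simp add: IPos_weak_def)
  next
    case 8 thus ?case by (simp add: IPos_weak_def)
  qed

lemma up_ax: "upper_semilattice_axioms (IPos_weak n)"
  proof
    fix x y assume xy: "x \<in> carrier (IPos_weak n)" "y \<in> carrier (IPos_weak n)"
    hence "int_poset n x" "int_poset n y" by (simp_all add: IPos_weak_def)
    then obtain J where J: "int_poset n J" "weak_le x J" "weak_le y J"
      "\<And>T. int_poset n T \<Longrightarrow> weak_le x T \<Longrightarrow> weak_le y T \<Longrightarrow> weak_le J T"
      using join_ex[of n x y] by blast
    have "least (IPos_weak n) J (Upper (IPos_weak n) {x, y})"
      unfolding least_def Upper_def using J xy by (simp add: IPos_weak_def)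
    thus "\<exists>s. least (IPos_weak n) s (Upper (IPos_weak n) {x, y})" by blast
  qed
lemma lo_ax: "lower_semilattice_axioms (IPos_weak n)"
  proof
    fix x y assume xy: "x \<in> carrier (IPos_weak n)" "y \<in> carrier (IPos_weak n)"
    hence "int_poset n x" "int_poset n y" by (simp_all add: IPos_weak_def)
    then obtain J where J: "int_poset n J" "weak_le J x" "weak_le J y"
      "\<And>T. int_poset n T \<Longrightarrow> weak_le T x \<Longrightarrow> weak_le T y \<Longrightarrow> weak_le T J"
      using meet_ex[of n x y] by blast
    have "greatest (IPos_weak n) J (Lower (IPos_weak n) {x, y})"
      unfolding greatest_def Lower_def using J xy by (simp add: IPos_weak_def)
    thus "\<exists>s. greatest (IPos_weak n) s (Lower (IPos_weak n) {x, y})" by blast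
  qed
theorem theorem1:
  fixes n :: nat
  assumes "n \<ge> 1"
  shows "lattice (IPos_weak n)"
  using po_ax[of n] up_ax[of n] lo_ax[of n]
  unfolding lattice_def upper_semilattice_def lower_semilattice_def by blast

end
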